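(* For every positive integer $n$ there exist $n$ Boolean attributes $A_1,\ldots,A_n$, a binary boosted tree $BT=\{F\}$ consisting of a single forest $F$ over them, and an instance $\vec x\in\vec X$ such that the unique tree-specific explanation for $\vec x$ given $BT$ is $t_{\vec x}$ itself, while $\emptyset$ is the unique sufficient reason for $\vec x$ given $BT$.
   Context: With Boolean attributes $A_1,\ldots,A_n$ (domain $\{0,1\}$), an instance is $\vec x=(v_1,\ldots,v_n)\in\{0,1\}^n$; $\vec X$ is the set of all instances; $t_{\vec x}=\{(A_i=v_i):i\in[n]\}$. An instance $\vec x'$ extends $t$ if $t\subseteq t_{\vec x'}$. A regression tree is a finite binary tree whose internal nodes are labelled by conditions $A_i=1$ and whose leaves are labelled by real numbers; $w(T,\vec x)$ is the label of the leaf reached by following, from the root, the branch determined by whether $\vec x$ satisfies each node's condition. For $t\subseteq t_{\vec x}$: $w_\downarrow(t,T)=\min\{w(T,\vec x'):\vec x'\text{ extends }t\}$, $w_\uparrow(t,T)=\max\{w(T,\vec x'):\vec x'\text{ extends }t\}$. A forest $F=\{T_1,\ldots,T_p\}$ has $w(F,\vec x)=\sum_k w(T_k,\vec x)$; for $BT=\{F\}$, $BT(\vec x)=1$ if $w(F,\vec x)>0$ and $0$ otherwise. An abductive explanation for $\vec x$ given $BT$ is $t\subseteq t_{\vec x}$ such that every $\vec x'$ extending $t$ has $BT(\vec x')=BT(\vec x)$; a sufficient reason is a subset-minimal abductive explanation. A tree-specific explanation for $\vec x$ given $BT$: if $BT(\vec x)=1$, a $t\subseteq t_{\vec x}$ with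 $\sum_k w_\downarrow(t,T_k)>0$ such that no proper subset of $t$ satisfies this; if $BT(\vec x)=0$, a $t\subseteq t_{\vec x}$ with $\sum_k w_\uparrow(t,T_k)\le 0$ such that no proper subset of $t$ satisfies this. *)

theory Defs
  imports Main Complex_Main
begin

text \<open>Attributes A_1..A_n are represented by indices 0..<n; an instance is a
  bool list of length n (entry i is the value of attribute i, True = 1).
  A term is a set of literals (i, v), meaning A_i = v.\<close>

datatype rtree = Leaf real | Node nat rtree rtree
  \<comment> \<open>Node i T1 T0: condition A_i = 1; T1 is followed if satisfied, T0 otherwise\<close>

fun tree_over :: "nat \<Rightarrow> rtree \<Rightarrow> bool" where
  "tree_over n (Leaf r) = True"
| "tree_over n (Node i t1 t0) = (i < n \<and> tree_over n t1 \<and> tree_over n t0)"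

fun wt :: "rtree \<Rightarrow> bool list \<Rightarrow> real" where
  "wt (Leaf r) x = r"
| "wt (Node i t1 t0) x = (if x ! i then wt t1 x else wt t0 x)"

definition instances :: "nat \<Rightarrow> bool list set" where
  "instances n = {x. length x = n}"

definition term_of :: "bool list \<Rightarrow> (nat \<times> bool) set" where
  "term_of x = {(i, x ! i) | i. i < length x}"

definition extends :: "nat \<Rightarrow> (nat \<times> bool) set \<Rightarrow> bool list \<Rightarrow> bool" where
  "extends n t x' \<longleftrightarrow> x' \<in> instances n \<and> t \<subseteq> term_of x'"

definition w_down :: "nat \<Rightarrow> (nat \<times> bool) set \<Rightarrow> rtree \<Rightarrow> real" where
  "w_down n t T = Min {wt T x' | x'. extends n t x'}"

definition w_up :: "nat \<Rightarrow> (nat \<times> bool) set \<Rightarrow> rtree \<Rightarrow> real" where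
  "w_up n t T = Max {wt T x' | x'. extends n t x'}"

type_synonym forest = "rtree list"

definition wF :: "forest \<Rightarrow> bool list \<Rightarrow> real" where
  "wF F x = (\<Sum>T\<leftarrow>F. wt T x)"

definition BT :: "forest \<Rightarrow> bool list \<Rightarrow> bool" where
  "BT F x \<longleftrightarrow> wF F x > 0"

definition abductive :: "nat \<Rightarrow> forest \<Rightarrow> bool list \<Rightarrow> (nat \<times> bool) set \<Rightarrow> bool" where
  "abductive n F x t \<longleftrightarrow> t \<subseteq> term_of x \<and> (\<forall>x'. extends n t x' \<longrightarrow> BT F x' = BT F x)"

definition sufficient_reason :: "nat \<Rightarrow> forest \<Rightarrow> bool list \<Rightarrow> (nat \<times> bool) set \<Rightarrow> bool" where
  "sufficient_reason n F x t \<longleftrightarrow> abductive n F x t \<and> (\<forall>t'. t' \<subset> t \<longrightarrow> \<not> abductive n F x t')"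

definition ts_pos :: "nat \<Rightarrow> forest \<Rightarrow> (nat \<times> bool) set \<Rightarrow> bool" where
  "ts_pos n F t \<longleftrightarrow> (\<Sum>T\<leftarrow>F. w_down n t T) > 0"

definition ts_neg :: "nat \<Rightarrow> forest \<Rightarrow> (nat \<times> bool) set \<Rightarrow> bool" where
  "ts_neg n F t \<longleftrightarrow> (\<Sum>T\<leftarrow>F. w_up n t T) \<le> 0"

definition tree_specific :: "nat \<Rightarrow> forest \<Rightarrow> bool list \<Rightarrow> (nat \<times> bool) set \<Rightarrow> bool" where
  "tree_specific n F x t \<longleftrightarrow> t \<subseteq> term_of x \<and>
     (if BT F x then ts_pos n F t \<and> (\<forall>t'. t' \<subset> t \<longrightarrow> \<not> ts_pos n F t')
      else ts_neg n F t \<and> (\<forall>t'. t' \<subset> t \<longrightarrow> \<not> ts_neg n F t'))"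

end

theory Submission
  imports Defs
begin

definition PF :: "nat \<Rightarrow> forest" where
  "PF n = concat (map (\<lambda>i. [Node i (Leaf 1) (Leaf (-1)), Node i (Leaf (-1)) (Leaf 1)]) [0..<n])"

lemma term_rep: "term_of (replicate n True) = {(i, True) | i. i < n}"
  unfolding term_of_def by auto

lemma ext_rep: "t \<subseteq> term_of (replicate n True) \<Longrightarrow> extends n t (replicate n True)"
  unfolding extends_def instances_def by auto

lemma ext_upd:
  assumes "t \<subseteq> term_of (replicate n True)" "(i, True) \<notin> t" "i < n"
  shows "extends n t ((replicate n True)[i := False])"
  unfolding extends_def instances_def
proof (intro conjI)
  show "t \<subseteq> term_of ((replicate n True)[i := False])"
  proof
    fix p assume p: "p \<in> t"
    then obtain j where j: "p = (j, True)" "j < n" using assms(1) term_rep by blast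
    then have "j \<noteq> i" using assms(2) p by auto
    then show "p \<in> term_of ((replicate n True)[i := False])"
      unfolding term_of_def using j by auto
  qed
qed simp

lemma ext_val:
  assumes "extends n t x'" "(i, True) \<in> t"
  shows "x' ! i"
proof -
  have "(i, True) \<in> term_of x'" using assms unfolding extends_def by auto
  then show ?thesis unfolding term_of_def by auto
qed

lemma wup:
  assumes "t \<subseteq> term_of (replicate n True)" "i < n"
  shows "w_up n t (Node i (Leaf a) (Leaf b)) = (if (i, True) \<in> t then a else max a b)"
proof (cases "(i, True) \<in> t")
  case True
  have "{wt (Node i (Leaf a) (Leaf b)) x' | x'. extends n t x'} = {a}"
    using ext_val[OF _ True] ext_rep[OF assms(1)] by fastforce
  then show ?thesis using True unfolding w_up_def by simp
next
  case False
  have "{wt (Node i (Leaf a) (Leaf b)) x' | x'. extends n t x'} = {a, b}"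
  proof
    show "{wt (Node i (Leaf a) (Leaf b)) x' | x'. extends n t x'} \<subseteq> {a, b}" by auto
    have "a = wt (Node i (Leaf a) (Leaf b)) (replicate n True)" using assms(2) by simp
    moreover have "b = wt (Node i (Leaf a) (Leaf b)) ((replicate n True)[i := False])"
      using assms(2) by simp
    ultimately show "{a, b} \<subseteq> {wt (Node i (Leaf a) (Leaf b)) x' | x'. extends n t x'}"
      using ext_rep[OF assms(1)] ext_upd[OF assms(1) False assms(2)] by blast
  qed
  then show ?thesis using False unfolding w_up_def by (simp add: max_def)
qed

lemma sum_concat: "(\<Sum>T\<leftarrow>concat (map (\<lambda>i. [f i, g i]) xs). (h T :: real)) = (\<Sum>i\<leftarrow>xs. h (f i) + h (g i))"
  by (induction xs) (auto simp: algebra_simps)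

lemma wF0: "wF (PF n) y = 0"
proof -
  have "wF (PF n) y = (\<Sum>i\<leftarrow>[0..<n]. wt (Node i (Leaf 1) (Leaf (-1))) y + wt (Node i (Leaf (-1)) (Leaf 1)) y)"
    unfolding wF_def PF_def by (rule sum_concat)
  also have "\<dots> = (\<Sum>i\<leftarrow>[0..<n]. 0)" by (intro arg_cong[where f=sum_list] map_cong) auto
  finally show ?thesis by simp
qed

lemma BTF: "\<not> BT (PF n) y" unfolding BT_def using wF0 by simp

lemma sum_up:
  assumes "t \<subseteq> term_of (replicate n True)"
  shows "(\<Sum>T\<leftarrow>PF n. w_up n t T) = (\<Sum>i\<in>{0..<n}. if (i, True) \<in> t then 0 else 2)"
proof -
  have "(\<Sum>T\<leftarrow>PF n. w_up n t T) = (\<Sum>i\<leftarrow>[0..<n]. w_up n t (Node i (Leaf 1) (Leaf (-1))) + w_up n t (Node i (Leaf (-1)) (Leaf 1)))"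
    unfolding PF_def by (rule sum_concat)
  also have "\<dots> = (\<Sum>i\<leftarrow>[0..<n]. if (i, True) \<in> t then 0 else 2)"
    by (intro arg_cong[where f=sum_list] map_cong) (auto simp: wup[OF assms])
  also have "\<dots> = (\<Sum>i\<in>{0..<n}. if (i, True) \<in> t then 0 else 2)"
    by (simp add: sum_list_distinct_conv_sum_set)
  finally show ?thesis .
qed

lemma tsneg_iff:
  assumes "t \<subseteq> term_of (replicate n True)"
  shows "ts_neg n (PF n) t \<longleftrightarrow> t = term_of (replicate n True)"
proof -
  have "ts_neg n (PF n) t \<longleftrightarrow> (\<Sum>i\<in>{0..<n}. if (i, True) \<in> t then 0 else (2::real)) = 0"
    unfolding ts_neg_def sum_up[OF assms]
    by (smt (verit, ccfv_SIG) sum_nonneg)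
  also have "\<dots> \<longleftrightarrow> (\<forall>i\<in>{0..<n}. (i, True) \<in> t)"
    by (subst sum_nonneg_eq_0_iff) auto
  also have "\<dots> \<longleftrightarrow> t = term_of (replicate n True)"
    using assms unfolding term_rep by auto
  finally show ?thesis .
qed

theorem proposition5:
  fixes n :: nat
  assumes "n > 0"
  shows "\<exists>(F :: forest) x. (\<forall>T\<in>set F. tree_over n T) \<and> x \<in> instances n \<and>
           (\<forall>t. tree_specific n F x t \<longleftrightarrow> t = term_of x) \<and>
           (\<forall>t. sufficient_reason n F x t \<longleftrightarrow> t = {})"
proof (intro exI conjI allI)
  let ?x = "replicate n True"
  show "\<forall>T\<in>set (PF n). tree_over n T" unfolding PF_def by auto
  show "?x \<in> instances n" unfolding instances_def by simp
  fix t
  show "tree_specific n (PF n) ?x t \<longleftrightarrow> t = term_of ?x"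
  proof
    assume h: "tree_specific n (PF n) ?x t"
    then show "t = term_of ?x" unfolding tree_specific_def using BTF tsneg_iff by auto
  next
    assume h: "t = term_of ?x"
    show "tree_specific n (PF n) ?x t"
      unfolding tree_specific_def using BTF tsneg_iff h
      by (metis order.strict_implies_order order_refl psubset_eq)
  qed
next
  let ?x = "replicate n True"
  fix t
  have ab: "abductive n (PF n) ?x t \<longleftrightarrow> t \<subseteq> term_of ?x" for t
    unfolding abductive_def using BTF by auto
  show "sufficient_reason n (PF n) ?x t \<longleftrightarrow> t = {}"
    unfolding sufficient_reason_def ab by auto
qed

end
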